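(* Let $\mathrm{k}\ge1$ and consider real coefficients $a_j$ ($0\le j\le\mathrm{k}-1$), $b_j$ ($0\le j\le\mathrm{k}$), $c_j$ ($0\le j\le\mathrm{k}-1$) with $b_0>0$. Then no such $\mathrm{k}$-step implicit-explicit multistep method has consistency order $\mathrm{k}+1$; that is, the order conditions $$\sum_{j=0}^{\mathrm{k}-1}a_j=1,\qquad \sum_{j=0}^{\mathrm{k}-1}a_j\,\partial_\tau t_{n-j}^{\ell}=\ell\sum_{j=0}^{\mathrm{k}}b_j\,t_{n-j}^{\ell-1}=\ell\sum_{j=0}^{\mathrm{k}-1}c_j\,t_{n-j-1}^{\ell-1}\quad\text{for }1\le\ell\le\mathrm{k}+1,$$ cannot all hold (for $n\ge\mathrm{k}$ on a uniform mesh $t_j=j\tau$).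
   Context: The method in question is $\sum_{j=0}^{\mathrm{k}-1}a_j\partial_\tau u^{n-j}+\varpi\sum_{j=0}^{\mathrm{k}}b_j\mathcal{L}u^{n-j}=\sum_{j=0}^{\mathrm{k}-1}c_j\mathcal{F}(u^{n-j-1})$, where $\partial_\tau v^m=(v^m-v^{m-1})/\tau$; in the order conditions $\partial_\tau t^\ell_m=(t_m^\ell-t_{m-1}^\ell)/\tau$. The implicit part means $b_0>0$. *)

theory Defs
  imports Complex_Main
begin

definition mesh :: "real \<Rightarrow> nat \<Rightarrow> real" where
  "mesh \<tau> m = real m * \<tau>"

end

theory Submission
  imports Defs "HOL-Computational_Algebra.Polynomial"
begin

lemma poly_sum_bound:
  fixes p :: "real poly"
  assumes "degree p \<le> k"
  shows "poly p y = (\<Sum>i\<le>k. coeff p i * y ^ i)"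
proof -
  have "poly p y = (\<Sum>i\<le>degree p. coeff p i * y ^ i)" by (rule poly_altdef)
  also have "\<dots> = (\<Sum>i\<le>k. coeff p i * y ^ i)"
    by (rule sum.mono_neutral_left) (use assms in \<open>auto simp: le_degree\<close>)
  finally show ?thesis .
qed

theorem proposition3p2:
  fixes k n :: nat and \<tau> :: real and a b c :: "nat \<Rightarrow> real"
  assumes "k \<ge> 1" and "b 0 > 0" and "n \<ge> k" and "\<tau> > 0"
  shows "\<not> ((\<Sum>j<k. a j) = 1 \<and>
           (\<forall>l\<in>{1..k+1}.
              (\<Sum>j<k. a j * ((mesh \<tau> (n-j))^l - (mesh \<tau> (n-j-1))^l) / \<tau>)
                = real l * (\<Sum>j\<le>k. b j * (mesh \<tau> (n-j))^(l-1))
            \<and> real l * (\<Sum>j\<le>k. b j * (mesh \<tau> (n-j))^(l-1))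
                = real l * (\<Sum>j<k. c j * (mesh \<tau> (n-j-1))^(l-1))))"
proof
  assume H: "(\<Sum>j<k. a j) = 1 \<and>
           (\<forall>l\<in>{1..k+1}.
              (\<Sum>j<k. a j * ((mesh \<tau> (n-j))^l - (mesh \<tau> (n-j-1))^l) / \<tau>)
                = real l * (\<Sum>j\<le>k. b j * (mesh \<tau> (n-j))^(l-1))
            \<and> real l * (\<Sum>j\<le>k. b j * (mesh \<tau> (n-j))^(l-1))
                = real l * (\<Sum>j<k. c j * (mesh \<tau> (n-j-1))^(l-1)))"
  define x where "x j = mesh \<tau> (n - j)" for j
  have xs: "mesh \<tau> (n-j-1) = x (j+1)" for j unfolding x_def by (simp add: diff_diff_add)
  have mom: "(\<Sum>j\<le>k. b j * x j ^ m) = (\<Sum>j<k. c j * x (j+1) ^ m)" if "m \<le> k" for m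
  proof -
    have "real (m+1) * (\<Sum>j\<le>k. b j * x j ^ m) = real (m+1) * (\<Sum>j<k. c j * x (j+1) ^ m)"
      using H that unfolding x_def[symmetric] xs by (auto dest!: bspec[of _ _ "m+1"])
    then show ?thesis by simp
  qed
  define p where "p = (\<Prod>i\<in>{1..k}. [:- x i, 1:])"
  have dp: "degree p \<le> k"
  proof -
    have "degree p \<le> (\<Sum>i\<in>{1..k}. degree [:- x i, 1:])"
      unfolding p_def using degree_prod_sum_le[of "{1..k}" "\<lambda>i. [:- x i, 1:]"] by (simp add: o_def)
    also have "\<dots> = k" by simp
    finally show ?thesis .
  qed
  have lin: "(\<Sum>j\<le>k. b j * poly p (x j)) = (\<Sum>j<k. c j * poly p (x (j+1)))"
  proof -
    have "(\<Sum>j\<le>k. b j * poly p (x j)) = (\<Sum>j\<le>k. \<Sum>i\<le>k. coeff p i * (b j * x j ^ i))"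
      by (simp add: poly_sum_bound[OF dp] sum_distrib_left mult_ac)
    also have "\<dots> = (\<Sum>i\<le>k. coeff p i * (\<Sum>j\<le>k. b j * x j ^ i))"
      by (subst sum.swap) (simp add: sum_distrib_left)
    also have "\<dots> = (\<Sum>i\<le>k. coeff p i * (\<Sum>j<k. c j * x (j+1) ^ i))"
      using mom by simp
    also have "\<dots> = (\<Sum>j<k. \<Sum>i\<le>k. coeff p i * (c j * x (j+1) ^ i))"
      by (subst sum.swap) (simp add: sum_distrib_left)
    also have "\<dots> = (\<Sum>j<k. c j * poly p (x (j+1)))"
      by (simp add: poly_sum_bound[OF dp] sum_distrib_left mult_ac)
    finally show ?thesis .
  qed
  have z: "poly p (x j) = 0" if "j \<in> {1..k}" for j
    unfolding p_def poly_prod using that by (intro prod_zero) auto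
  have rhs: "(\<Sum>j<k. c j * poly p (x (j+1))) = 0"
    by (intro sum.neutral) (auto intro!: z)
  have lhs: "(\<Sum>j\<le>k. b j * poly p (x j)) = b 0 * poly p (x 0)"
  proof -
    have "(\<Sum>j\<le>k. b j * poly p (x j)) = (\<Sum>j\<in>{0}. b j * poly p (x j))"
      by (rule sum.mono_neutral_right) (auto intro!: z)
    then show ?thesis by simp
  qed
  have pos: "poly p (x 0) > 0"
  proof -
    have "poly p (x 0) = (\<Prod>i\<in>{1..k}. x 0 - x i)" unfolding p_def poly_prod by simp
    also have "\<dots> = (\<Prod>i\<in>{1..k}. real i * \<tau>)"
      using assms(3) by (intro prod.cong) (auto simp: x_def mesh_def of_nat_diff algebra_simps)
    also have "\<dots> > 0" using assms(4) by (intro prod_pos) auto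
    finally show ?thesis .
  qed
  show False using lin rhs lhs pos assms(2) by simp
qed

end
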